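(* Let $\mathfrak{T}$ be a topological space and let $\mathfrak{H}$ be the complete Heyting algebra of open sets of $\mathfrak{T}$, with point-free coderivative $\divideontimes \mathsf{h} := \bigwedge_{\mathsf{i}\in\mathfrak{H}}(\mathsf{i}\vee(\mathsf{i}\to\mathsf{h}))$. (1) If $\mathfrak{T}$ is scattered, then $\divideontimes$ is a $\mathsf{KM}$-operator on $\mathfrak{H}$. (2) If $\mathfrak{T}$ is $T_0$ and $\divideontimes$ is a $\mathsf{KM}$-operator on $\mathfrak{H}$, then $\mathfrak{T}$ is scattered.
   Context: A topological space is scattered if every nonempty subset has an isolated point (relative to the subspace). A unary operation $\Box$ on a Heyting algebra is a $\mathsf{KM}$-operator if for all $a,b$: $\Box\top=\top$, $\Box(a\wedge b)=\Box a\wedge\Box b$, $a\le\Box a$, $\Box a\le b\vee(b\to a)$, and $(\Box a\to a)\le a$. *)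

theory Defs
  imports "HOL-Analysis.Analysis"
begin

text \<open>The complete Heyting algebra of open sets of a topological space X:
  meet = intersection, join = union, top = topspace X,
  arbitrary meet = interior of the intersection,
  Heyting implication a \<rightarrow> b = interior of (complement of a union b).\<close>

definition opens_imp :: "'a topology \<Rightarrow> 'a set \<Rightarrow> 'a set \<Rightarrow> 'a set" where
  "opens_imp X a b = X interior_of ((topspace X - a) \<union> b)"

definition opens_Inf :: "'a topology \<Rightarrow> 'a set set \<Rightarrow> 'a set" where
  "opens_Inf X F = X interior_of (topspace X \<inter> \<Inter>F)"

definition coderiv :: "'a topology \<Rightarrow> 'a set \<Rightarrow> 'a set" where
  "coderiv X h = opens_Inf X {i \<union> opens_imp X i h | i. openin X i}"

definition KM_operator :: "'a topology \<Rightarrow> ('a set \<Rightarrow> 'a set) \<Rightarrow> bool" where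
  "KM_operator X B \<longleftrightarrow>
     (\<forall>a. openin X a \<longrightarrow> openin X (B a)) \<and>
     B (topspace X) = topspace X \<and>
     (\<forall>a b. openin X a \<longrightarrow> openin X b \<longrightarrow>
        B (a \<inter> b) = B a \<inter> B b \<and>
        a \<subseteq> B a \<and>
        B a \<subseteq> b \<union> opens_imp X b a \<and>
        opens_imp X (B a) a \<subseteq> a)"

definition scattered_space :: "'a topology \<Rightarrow> bool" where
  "scattered_space X \<longleftrightarrow>
     (\<forall>S. S \<subseteq> topspace X \<longrightarrow> S \<noteq> {} \<longrightarrow>
        (\<exists>x\<in>S. \<exists>U. openin X U \<and> U \<inter> S = {x}))"

end

theory Submission
  imports Defs
begin

lemma coderiv_mem:
  "x \<in> coderiv X a \<longleftrightarrow>
   (\<exists>V. openin X V \<and> x \<in> V \<and> (\<forall>y\<in>V. \<forall>i. openin X i \<longrightarrow> y \<in> i \<union> opens_imp X i a))"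
proof -
  have eq: "T \<subseteq> topspace X \<inter> \<Inter>{i \<union> opens_imp X i a | i. openin X i} \<longleftrightarrow>
     (\<forall>y\<in>T. \<forall>i. openin X i \<longrightarrow> y \<in> i \<union> opens_imp X i a)" if T: "openin X T" for T
  proof
    assume h: "T \<subseteq> topspace X \<inter> \<Inter>{i \<union> opens_imp X i a | i. openin X i}"
    show "\<forall>y\<in>T. \<forall>i. openin X i \<longrightarrow> y \<in> i \<union> opens_imp X i a"
    proof (intro ballI allI impI)
      fix y i assume "y \<in> T" "openin X i"
      then have "y \<in> \<Inter>{i \<union> opens_imp X i a | i. openin X i}" using h by blast
      moreover have "i \<union> opens_imp X i a \<in> {i \<union> opens_imp X i a | i. openin X i}"
        using \<open>openin X i\<close> by blast
      ultimately show "y \<in> i \<union> opens_imp X i a" by (rule InterD)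
    qed
  next
    assume h: "\<forall>y\<in>T. \<forall>i. openin X i \<longrightarrow> y \<in> i \<union> opens_imp X i a"
    show "T \<subseteq> topspace X \<inter> \<Inter>{i \<union> opens_imp X i a | i. openin X i}"
    proof
      fix y assume y: "y \<in> T"
      have "y \<in> topspace X" using y openin_subset[OF T] by (rule subsetD[rotated])
      moreover have "y \<in> \<Inter>{i \<union> opens_imp X i a | i. openin X i}"
      proof (rule InterI)
        fix Z assume "Z \<in> {i \<union> opens_imp X i a | i. openin X i}"
        then obtain i where "Z = i \<union> opens_imp X i a" "openin X i" by blast
        then show "y \<in> Z" using h y by blast
      qed
      ultimately show "y \<in> topspace X \<inter> \<Inter>{i \<union> opens_imp X i a | i. openin X i}" by (rule IntI)
    qed
  qed
  show ?thesis
    unfolding coderiv_def opens_Inf_def interior_of_def mem_Collect_eq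
  proof
    assume "\<exists>T. openin X T \<and> x \<in> T \<and> T \<subseteq> topspace X \<inter> \<Inter>{i \<union> opens_imp X i a | i. openin X i}"
    then obtain T where "openin X T" "x \<in> T" "T \<subseteq> topspace X \<inter> \<Inter>{i \<union> opens_imp X i a | i. openin X i}"
      by blast
    then show "\<exists>V. openin X V \<and> x \<in> V \<and> (\<forall>y\<in>V. \<forall>i. openin X i \<longrightarrow> y \<in> i \<union> opens_imp X i a)"
      using eq by blast
  next
    assume "\<exists>V. openin X V \<and> x \<in> V \<and> (\<forall>y\<in>V. \<forall>i. openin X i \<longrightarrow> y \<in> i \<union> opens_imp X i a)"
    then obtain T where "openin X T" "x \<in> T" "\<forall>y\<in>T. \<forall>i. openin X i \<longrightarrow> y \<in> i \<union> opens_imp X i a"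
      by blast
    then show "\<exists>T. openin X T \<and> x \<in> T \<and> T \<subseteq> topspace X \<inter> \<Inter>{i \<union> opens_imp X i a | i. openin X i}"
      using eq by blast
  qed
qed

lemma opens_imp_mem:
  "y \<in> opens_imp X i a \<longleftrightarrow> (\<exists>W. openin X W \<and> y \<in> W \<and> W \<subseteq> (topspace X - i) \<union> a)"
  unfolding opens_imp_def interior_of_def by blast

lemma opens_imp_Int: "opens_imp X i (a \<inter> b) = opens_imp X i a \<inter> opens_imp X i b"
proof -
  have "(topspace X - i) \<union> (a \<inter> b) = ((topspace X - i) \<union> a) \<inter> ((topspace X - i) \<union> b)" by blast
  then show ?thesis unfolding opens_imp_def by (simp add: interior_of_Int)
qed

lemma open_sub_imp: "openin X a \<Longrightarrow> a \<subseteq> opens_imp X i a"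
  unfolding opens_imp_def by (meson interior_of_maximal le_supI2 order_refl)

lemma coderiv_memI:
  assumes "openin X V" "x \<in> V" "\<And>y i. y \<in> V \<Longrightarrow> openin X i \<Longrightarrow> y \<in> i \<union> opens_imp X i a"
  shows "x \<in> coderiv X a"
  unfolding coderiv_mem using assms by blast

lemma coderiv_memE:
  assumes "x \<in> coderiv X a"
  obtains V where "openin X V" "x \<in> V" "\<And>y i. y \<in> V \<Longrightarrow> openin X i \<Longrightarrow> y \<in> i \<union> opens_imp X i a"
  using assms unfolding coderiv_mem by blast

lemma coderiv_Int:
  assumes "openin X a" "openin X b"
  shows "coderiv X (a \<inter> b) = coderiv X a \<inter> coderiv X b"
proof
  show "coderiv X (a \<inter> b) \<subseteq> coderiv X a \<inter> coderiv X b"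
  proof
    fix x assume "x \<in> coderiv X (a \<inter> b)"
    then obtain V where V: "openin X V" "x \<in> V"
      and P: "\<And>y i. y \<in> V \<Longrightarrow> openin X i \<Longrightarrow> y \<in> i \<union> opens_imp X i (a \<inter> b)"
      by (elim coderiv_memE) blast
    have "x \<in> coderiv X a"
      by (rule coderiv_memI[OF V]) (use P in \<open>auto simp: opens_imp_Int\<close>)
    moreover have "x \<in> coderiv X b"
      by (rule coderiv_memI[OF V]) (use P in \<open>auto simp: opens_imp_Int\<close>)
    ultimately show "x \<in> coderiv X a \<inter> coderiv X b" by blast
  qed
next
  show "coderiv X a \<inter> coderiv X b \<subseteq> coderiv X (a \<inter> b)"
  proof
    fix x assume "x \<in> coderiv X a \<inter> coderiv X b"
    then obtain V1 V2 where V1: "openin X V1" "x \<in> V1"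
      and P1: "\<And>y i. y \<in> V1 \<Longrightarrow> openin X i \<Longrightarrow> y \<in> i \<union> opens_imp X i a"
      and V2: "openin X V2" "x \<in> V2"
      and P2: "\<And>y i. y \<in> V2 \<Longrightarrow> openin X i \<Longrightarrow> y \<in> i \<union> opens_imp X i b"
      by (elim IntE coderiv_memE) blast
    show "x \<in> coderiv X (a \<inter> b)"
    proof (rule coderiv_memI[of X "V1 \<inter> V2"])
      show "openin X (V1 \<inter> V2)" using V1 V2 by blast
      show "x \<in> V1 \<inter> V2" using V1 V2 by blast
      fix y i assume "y \<in> V1 \<inter> V2" "openin X i"
      then show "y \<in> i \<union> opens_imp X i (a \<inter> b)"
        using P1[of y i] P2[of y i] by (auto simp: opens_imp_Int)
    qed
  qed
qed

lemma general_KM: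
  assumes "\<forall>a. openin X a \<longrightarrow> opens_imp X (coderiv X a) a \<subseteq> a"
  shows "KM_operator X (coderiv X)"
  unfolding KM_operator_def
proof (intro conjI allI impI)
  fix a show "openin X (coderiv X a)" by (simp add: coderiv_def opens_Inf_def)
next
  show "coderiv X (topspace X) = topspace X"
  proof
    show "coderiv X (topspace X) \<subseteq> topspace X"
      by (simp add: coderiv_def opens_Inf_def interior_of_subset_topspace)
    show "topspace X \<subseteq> coderiv X (topspace X)"
    proof
      fix x assume "x \<in> topspace X"
      moreover have "\<forall>y\<in>topspace X. \<forall>i. openin X i \<longrightarrow> y \<in> i \<union> opens_imp X i (topspace X)"
        using open_sub_imp[of X "topspace X"] by blast
      ultimately show "x \<in> coderiv X (topspace X)"
        by (intro coderiv_memI[of X "topspace X"]) auto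
    qed
  qed
next
  fix a b assume a: "openin X a" and b: "openin X b"
  show "coderiv X (a \<inter> b) = coderiv X a \<inter> coderiv X b" using coderiv_Int a b .
  show "a \<subseteq> coderiv X a"
  proof
    fix x assume "x \<in> a"
    then show "x \<in> coderiv X a"
      using a open_sub_imp[OF a] by (intro coderiv_memI[of X a]) auto
  qed
  show "coderiv X a \<subseteq> b \<union> opens_imp X b a"
  proof
    fix x assume "x \<in> coderiv X a"
    then obtain V where "x \<in> V"
      and P: "\<And>y i. y \<in> V \<Longrightarrow> openin X i \<Longrightarrow> y \<in> i \<union> opens_imp X i a"
      by (elim coderiv_memE) blast
    then show "x \<in> b \<union> opens_imp X b a" using b by blast
  qed
  show "opens_imp X (coderiv X a) a \<subseteq> a" using assms a by blast
qed

lemma scatteredD: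
  assumes "scattered_space X" "S \<subseteq> topspace X" "S \<noteq> {}"
  shows "\<exists>x\<in>S. \<exists>U. openin X U \<and> U \<inter> S = {x}"
  using assms unfolding scattered_space_def by simp

lemma scattered_loeb:
  assumes sc: "scattered_space X" and a: "openin X a"
  shows "opens_imp X (coderiv X a) a \<subseteq> a"
proof (rule ccontr)
  define W where "W = opens_imp X (coderiv X a) a"
  assume "\<not> opens_imp X (coderiv X a) a \<subseteq> a"
  then have ne: "W - a \<noteq> {}" unfolding W_def by blast
  have Wo: "openin X W" unfolding W_def opens_imp_def by simp
  have Wsub: "W \<subseteq> (topspace X - coderiv X a) \<union> a"
    unfolding W_def opens_imp_def by (rule interior_of_subset)
  have Wt: "W \<subseteq> topspace X" using openin_subset[OF Wo] .
  have "W - a \<subseteq> topspace X" using Wt by blast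
  from scatteredD[OF sc this ne]
  obtain x U where x: "x \<in> W - a" and Uo: "openin X U" and Ux: "U \<inter> (W - a) = {x}"
    by blast
  have xU: "x \<in> U" using Ux by blast
  have Ua: "\<And>y. y \<in> U \<Longrightarrow> y \<in> W \<Longrightarrow> y \<noteq> x \<Longrightarrow> y \<in> a"
  proof (rule ccontr)
    fix y assume "y \<in> U" "y \<in> W" "y \<noteq> x" "y \<notin> a"
    then have "y \<in> U \<inter> (W - a)" by blast
    then show False using Ux \<open>y \<noteq> x\<close> by simp
  qed
  have "x \<in> coderiv X a"
  proof (rule coderiv_memI[of X "U \<inter> W"])
    show "openin X (U \<inter> W)" using Uo Wo by (rule openin_Int)
    show "x \<in> U \<inter> W" using xU x by blast
    fix y i assume y: "y \<in> U \<inter> W" and i: "openin X i"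
    show "y \<in> i \<union> opens_imp X i a"
    proof (cases "y = x")
      case False
      then have "y \<in> a" using y Ua by blast
      then show ?thesis using open_sub_imp[OF a, of i] by blast
    next
      case True
      show ?thesis
      proof (cases "y \<in> i")
        case False
        have sub: "U \<inter> W \<subseteq> (topspace X - i) \<union> a"
        proof
          fix z assume z: "z \<in> U \<inter> W"
          show "z \<in> (topspace X - i) \<union> a"
          proof (cases "z = x")
            case True
            then show ?thesis using z Wt False \<open>y = x\<close> by blast
          next
            case False
            then show ?thesis using z Ua by blast
          qed
        qed
        have "openin X (U \<inter> W)" using Uo Wo by (rule openin_Int)
        then have "y \<in> opens_imp X i a"
          unfolding opens_imp_def using sub y by (meson interior_of_maximal subsetD)
        then show ?thesis by blast
      qed blast
    qed
  qed
  then show False using x Wsub by blast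
qed

lemma t0_scattered:
  assumes t0: "t0_space X"
    and loeb: "\<forall>a. openin X a \<longrightarrow> opens_imp X (coderiv X a) a \<subseteq> a"
  shows "scattered_space X"
  unfolding scattered_space_def
proof (intro allI impI, rule ccontr)
  fix S assume Ssub: "S \<subseteq> topspace X" and Sne: "S \<noteq> {}"
    and nb: "\<not> (\<exists>x\<in>S. \<exists>U. openin X U \<and> U \<inter> S = {x})"
  have noiso: "\<And>x U. x \<in> S \<Longrightarrow> openin X U \<Longrightarrow> U \<inter> S \<noteq> {x}"
  proof
    fix x U assume "x \<in> S" "openin X U" "U \<inter> S = {x}"
    then show False using nb by blast
  qed
  define C where "C = X closure_of S"
  define a where "a = topspace X - C"
  have ao: "openin X a" unfolding a_def C_def by (simp add: openin_diff)
  have SC: "S \<subseteq> C" unfolding C_def using closure_of_subset[OF Ssub] .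
  have Ctop: "C \<subseteq> topspace X" unfolding C_def by (rule closure_of_subset_topspace)
  have key: "\<And>x. x \<in> C \<Longrightarrow> x \<notin> coderiv X a"
  proof
    fix x assume xC: "x \<in> C" and "x \<in> coderiv X a"
    then obtain V where Vo: "openin X V" and xV: "x \<in> V"
      and Vp0: "\<And>y i. y \<in> V \<Longrightarrow> openin X i \<Longrightarrow> y \<in> i \<union> opens_imp X i a"
      by (elim coderiv_memE) blast
    have Vp: "\<forall>y\<in>V. \<forall>i. openin X i \<longrightarrow> y \<in> i \<union> opens_imp X i a" using Vp0 by blast
    have bad: "y \<notin> X closure_of (C - X closure_of {y})" if yV: "y \<in> V" for y
    proof
      assume ycl: "y \<in> X closure_of (C - X closure_of {y})"
      define i where "i = topspace X - X closure_of {y}"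
      have io: "openin X i" unfolding i_def by (simp add: openin_diff)
      have ytop: "y \<in> topspace X" using yV openin_subset[OF Vo] by blast
      have "y \<in> X closure_of {y}" using ytop closure_of_subset[of "{y}" X] by blast
      then have "y \<notin> i" unfolding i_def by blast
      then have "y \<in> opens_imp X i a" using Vp yV io by blast
      then obtain W where Wo: "openin X W" and yW: "y \<in> W"
        and Ws: "W \<subseteq> (topspace X - i) \<union> a" unfolding opens_imp_mem by blast
      obtain z where "z \<in> C - X closure_of {y}" "z \<in> W"
        using ycl Wo yW unfolding in_closure_of by blast
      then show False using Ws unfolding i_def a_def using Ctop by blast
    qed
    obtain y where yS: "y \<in> S" and yV: "y \<in> V"
      using xC Vo xV unfolding C_def in_closure_of by blast
    have ytop: "y \<in> topspace X" using yS Ssub by blast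
    obtain W0 where W0o: "openin X W0" and yW0: "y \<in> W0"
      and W0e: "\<And>z. z \<in> C - X closure_of {y} \<Longrightarrow> z \<notin> W0"
      using bad[OF yV] ytop unfolding in_closure_of by blast
    have "(W0 \<inter> V) \<inter> S \<noteq> {y}" using noiso[OF yS] W0o Vo by blast
    then obtain z where zW: "z \<in> W0" "z \<in> V" and zS: "z \<in> S" and zy: "z \<noteq> y"
      using yS yW0 yV by blast
    have zcl: "z \<in> X closure_of {y}" using W0e zW zS SC by blast
    have ztop: "z \<in> topspace X" using zS Ssub by blast
    have "\<exists>U. openin X U \<and> (y \<notin> U \<longleftrightarrow> z \<in> U)"
      using t0 ytop ztop zy unfolding t0_space_def by blast
    then obtain U where Uo: "openin X U" and Ue: "y \<notin> U \<longleftrightarrow> z \<in> U" by blast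
    have zU: "z \<notin> U"
    proof
      assume "z \<in> U"
      then have "y \<in> U" using zcl Uo unfolding in_closure_of by blast
      then show False using Ue \<open>z \<in> U\<close> by blast
    qed
    then have yU: "y \<in> U" using Ue by blast
    have ync: "y \<notin> X closure_of {z}"
      using Uo yU zU unfolding in_closure_of by blast
    have "z \<in> X closure_of (C - X closure_of {z})"
      unfolding in_closure_of
    proof (intro conjI allI impI)
      show "z \<in> topspace X" by (rule ztop)
      fix T assume "z \<in> T \<and> openin X T"
      then have "y \<in> T" using zcl unfolding in_closure_of by blast
      then show "\<exists>w. w \<in> C - X closure_of {z} \<and> w \<in> T" using yS SC ync by blast
    qed
    then show False using bad[OF zW(2)] by blast
  qed
  have cd: "coderiv X a \<subseteq> topspace X"
    by (simp add: coderiv_def opens_Inf_def interior_of_subset_topspace)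
  have "(topspace X - coderiv X a) \<union> a = topspace X"
    using key cd unfolding a_def by blast
  then have "opens_imp X (coderiv X a) a = topspace X"
    unfolding opens_imp_def by simp
  moreover have "opens_imp X (coderiv X a) a \<subseteq> a" using loeb ao by blast
  ultimately have "topspace X \<subseteq> a" by simp
  then show False using Sne SC Ssub unfolding a_def by blast
qed

theorem proposition4p8:
  fixes X :: "'a topology"
  shows "(scattered_space X \<longrightarrow> KM_operator X (coderiv X)) \<and>
         (t0_space X \<and> KM_operator X (coderiv X) \<longrightarrow> scattered_space X)"
proof (intro conjI impI)
  assume "scattered_space X"
  then show "KM_operator X (coderiv X)"
    using general_KM scattered_loeb by blast
next
  assume h: "t0_space X \<and> KM_operator X (coderiv X)"
  then have "\<forall>a. openin X a \<longrightarrow> opens_imp X (coderiv X a) a \<subseteq> a"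
    unfolding KM_operator_def by blast
  then show "scattered_space X" using t0_scattered h by blast
qed

end
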